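(* Let $f\colon\mathbb Z^m\to\mathbb Q\cup\{\infty\}$ be SBO jump M-convex. Let $r\in\mathbb Z^m$, let $z^{(1)},z^{(2)}\in\mathbb Z^m$ with $z^{(1)},z^{(2)}\equiv r\pmod 2$, and let $i^*\in[m]$ satisfy $z^{(1)}_{i^*}-z^{(2)}_{i^*}\ge2$. Then there exist $z^{(1)\prime},z^{(2)\prime}\in\mathbb Z^m$ such that: - $z^{(1)\prime},z^{(2)\prime}\equiv r\pmod2$; - $z^{(1)\prime}+z^{(2)\prime}=z^{(1)}+z^{(2)}$; - $z^{(1)\prime}_{i^*}=z^{(1)}_{i^*}-2$ and $z^{(2)\prime}_{i^*}=z^{(2)}_{i^*}+2$; - for all $i\in[m]$, if $z^{(1)}_i=z^{(2)}_i$ then $z^{(1)}_i=z^{(1)\prime}_i=z^{(2)\prime}_i=z^{(2)}_i$; - $f(z^{(1)\prime})+f(z^{(2)\prime})\le f(z^{(1)})+f(z^{(2)})$.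
   Context: For $x,y\in\mathbb Z^m$, write $x\sqsubseteq y$ if $|x_i|\le|y_i|$ and $x_iy_i\ge0$ for all $i$. A $2$-step decomposition of $d\in\mathbb Z^m$ is a multiset $p^{(1)},\dots,p^{(\ell)}\in\mathbb Z^m$ with $\|p^{(k)}\|_1=2$ and $p^{(k)}\sqsubseteq d$ for all $k$, and $d=\sum_kp^{(k)}$. $f$ is SBO jump M-convex if the following holds for all $z^{(1)},z^{(2)}$ with finite $f$-values. There must exist a $2$-step decomposition $p^{(1)},\dots,p^{(\ell)}$ of $z^{(2)}-z^{(1)}$ and reals $g^{(1)},\dots,g^{(\ell)}$ such that: - $f(z^{(2)})=f(z^{(1)})+\sum_kg^{(k)}$; - $f(z^{(1)}+\sum_{k\in I}p^{(k)})\le f(z^{(1)})+\sum_{k\in I}g^{(k)}$ for all $I\subseteq[\ell]$. Congruence modulo $2$ is componentwise. *)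

theory Defs
  imports "HOL-Library.Extended_Real"
begin

text \<open>Vectors in Z^m are functions from a finite index type 'n (with CARD('n) = m) to int.
  Values in Q \<union> {\<infinity>} are represented in ereal (with an explicit range assumption).\<close>

definition sqsub :: "('n \<Rightarrow> int) \<Rightarrow> ('n \<Rightarrow> int) \<Rightarrow> bool" where
  "sqsub x y \<longleftrightarrow> (\<forall>i. \<bar>x i\<bar> \<le> \<bar>y i\<bar> \<and> x i * y i \<ge> 0)"

text \<open>A 2-step decomposition of d: a family p 0, ..., p (l-1) (a multiset, given as an indexed family).\<close>
definition two_step_decomp :: "nat \<Rightarrow> (nat \<Rightarrow> ('n::finite \<Rightarrow> int)) \<Rightarrow> ('n \<Rightarrow> int) \<Rightarrow> bool" where
  "two_step_decomp l p d \<longleftrightarrow>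
     (\<forall>k<l. (\<Sum>i\<in>UNIV. \<bar>p k i\<bar>) = 2 \<and> sqsub (p k) d) \<and> d = (\<lambda>i. \<Sum>k<l. p k i)"

definition SBO_jump_M_convex :: "(('n::finite \<Rightarrow> int) \<Rightarrow> ereal) \<Rightarrow> bool" where
  "SBO_jump_M_convex f \<longleftrightarrow>
     (\<forall>z1 z2. f z1 \<noteq> \<infinity> \<and> f z2 \<noteq> \<infinity> \<longrightarrow>
        (\<exists>l p (g :: nat \<Rightarrow> real).
           two_step_decomp l p (\<lambda>i. z2 i - z1 i) \<and>
           f z2 = f z1 + ereal (\<Sum>k<l. g k) \<and>
           (\<forall>I\<subseteq>{..<l}. f (\<lambda>i. z1 i + (\<Sum>k\<in>I. p k i)) \<le> f z1 + ereal (\<Sum>k\<in>I. g k))))"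

end

theory Submission
  imports Defs
begin

lemma edge_shape:
  fixes a :: "'n::finite \<Rightarrow> int"
  assumes nn: "\<forall>i. a i \<ge> 0" and s2: "(\<Sum>i\<in>UNIV. a i) = 2" and pos: "a t > 0"
  shows "(a t = 2 \<and> (\<forall>i. i\<noteq>t \<longrightarrow> a i = 0)) \<or>
         (a t = 1 \<and> (\<exists>w. w\<noteq>t \<and> a w = 1 \<and> (\<forall>i. i\<noteq>t \<and> i\<noteq>w \<longrightarrow> a i = 0)))"
proof -
  have S: "a t + (\<Sum>i\<in>UNIV-{t}. a i) = 2"
    using s2 by (metis finite UNIV_I sum.remove)
  have R0: "(\<Sum>i\<in>UNIV-{t}. a i) \<ge> 0" using nn by (simp add: sum_nonneg)
  show ?thesis
  proof (cases "a t = 2")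
    case True
    then have "(\<Sum>i\<in>UNIV-{t}. a i) = 0" using S by simp
    then have "\<forall>i\<in>UNIV-{t}. a i = 0" using nn by (subst (asm) sum_nonneg_eq_0_iff) auto
    then show ?thesis using True by auto
  next
    case False
    then have at1: "a t = 1" using S R0 pos by linarith
    then have R1: "(\<Sum>i\<in>UNIV-{t}. a i) = 1" using S by simp
    then obtain w where w: "w \<in> UNIV-{t}" "a w \<noteq> 0"
      by (metis sum.neutral zero_neq_one)
    have S2: "a w + (\<Sum>i\<in>UNIV-{t}-{w}. a i) = 1"
      using R1 w(1) by (metis finite sum.remove)
    have R2: "(\<Sum>i\<in>UNIV-{t}-{w}. a i) \<ge> 0" using nn by (simp add: sum_nonneg)
    have aw: "a w = 1" using S2 R2 w(2) nn[rule_format, of w] by linarith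
    then have "(\<Sum>i\<in>UNIV-{t}-{w}. a i) = 0" using S2 by simp
    then have "\<forall>i\<in>UNIV-{t}-{w}. a i = 0" using nn by (subst (asm) sum_nonneg_eq_0_iff) auto
    then show ?thesis using at1 aw w by auto
  qed
qed

lemma path_lemma:
  fixes a :: "nat \<Rightarrow> 'n::finite \<Rightarrow> int"
  assumes "finite K" "\<forall>k\<in>K. (\<forall>i. a k i \<ge> 0) \<and> (\<Sum>i\<in>UNIV. a k i) = 2"
   "s \<noteq> t" "odd (\<Sum>k\<in>K. a k s)" "odd (\<Sum>k\<in>K. a k t)"
   "\<forall>i. i\<noteq>s \<and> i\<noteq>t \<longrightarrow> even (\<Sum>k\<in>K. a k i)"
  shows "\<exists>J\<subseteq>K. (\<Sum>k\<in>J. a k s) = 1 \<and> odd (\<Sum>k\<in>J. a k t) \<and>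
           (\<forall>i. i\<noteq>s \<and> i\<noteq>t \<longrightarrow> even (\<Sum>k\<in>J. a k i))"
  using assms
proof (induction "card K" arbitrary: K t rule: less_induct)
  case less
  note fin = less.prems(1) and edg = less.prems(2) and st = less.prems(3)
    and os = less.prems(4) and ot = less.prems(5) and ev = less.prems(6)
  have "(\<Sum>k\<in>K. a k t) \<noteq> 0" using ot by auto
  then obtain k where kK: "k \<in> K" and akt: "a k t \<noteq> 0" by (meson sum.neutral)
  have nn: "\<forall>i. a k i \<ge> 0" and s2: "(\<Sum>i\<in>UNIV. a k i) = 2" using edg kK by auto
  have pos: "a k t > 0" using nn[rule_format, of t] akt by linarith
  have rem: "\<And>i. (\<Sum>k'\<in>K-{k}. a k' i) = (\<Sum>k'\<in>K. a k' i) - a k i"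
    using fin kK by (simp add: sum_diff1)
  have finK': "finite (K-{k})" using fin by simp
  have cardK': "card (K-{k}) < card K" using fin kK by (rule card_Diff1_less)
  have edg': "\<forall>k\<in>K-{k}. (\<forall>i. a k i \<ge> 0) \<and> (\<Sum>i\<in>UNIV. a k i) = 2" using edg by auto
  from edge_shape[OF nn s2 pos] show ?case
  proof
    assume L: "a k t = 2 \<and> (\<forall>i. i\<noteq>t \<longrightarrow> a k i = 0)"
    have "\<exists>J\<subseteq>K-{k}. (\<Sum>k\<in>J. a k s) = 1 \<and> odd (\<Sum>k\<in>J. a k t) \<and>
           (\<forall>i. i\<noteq>s \<and> i\<noteq>t \<longrightarrow> even (\<Sum>k\<in>J. a k i))"
    proof (rule less.hyps[OF cardK' finK' edg' st])
      show "odd (\<Sum>k\<in>K-{k}. a k s)" using os L st by (simp add: rem)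
      show "odd (\<Sum>k\<in>K-{k}. a k t)" using ot L by (simp add: rem)
      show "\<forall>i. i\<noteq>s \<and> i\<noteq>t \<longrightarrow> even (\<Sum>k\<in>K-{k}. a k i)" using ev L by (simp add: rem)
    qed
    then show ?thesis by blast
  next
    assume "a k t = 1 \<and> (\<exists>w. w\<noteq>t \<and> a k w = 1 \<and> (\<forall>i. i\<noteq>t \<and> i\<noteq>w \<longrightarrow> a k i = 0))"
    then obtain w where akt1: "a k t = 1" and wt: "w \<noteq> t" and akw: "a k w = 1"
      and oth: "\<forall>i. i\<noteq>t \<and> i\<noteq>w \<longrightarrow> a k i = 0" by blast
    show ?thesis
    proof (cases "w = s")
      case True
      show ?thesis
        by (rule exI[of _ "{k}"]) (use kK akw akt1 oth True in auto)
    next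
      case False
      have aks: "a k s = 0" using oth False st by auto
      have "\<exists>J\<subseteq>K-{k}. (\<Sum>k\<in>J. a k s) = 1 \<and> odd (\<Sum>k\<in>J. a k w) \<and>
           (\<forall>i. i\<noteq>s \<and> i\<noteq>w \<longrightarrow> even (\<Sum>k\<in>J. a k i))"
      proof (rule less.hyps[OF cardK' finK' edg'])
        show "s \<noteq> w" using False by simp
        show "odd (\<Sum>k\<in>K-{k}. a k s)" using os aks by (simp add: rem)
        show "odd (\<Sum>k\<in>K-{k}. a k w)" using ev[rule_format, of w] False wt akw by (simp add: rem)
        show "\<forall>i. i\<noteq>s \<and> i\<noteq>w \<longrightarrow> even (\<Sum>k\<in>K-{k}. a k i)"
        proof (intro allI impI)
          fix i assume i: "i\<noteq>s \<and> i\<noteq>w"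
          show "even (\<Sum>k\<in>K-{k}. a k i)"
          proof (cases "i = t")
            case True then show ?thesis using ot akt1 by (simp add: rem)
          next
            case False then show ?thesis using ev i oth by (simp add: rem)
          qed
        qed
      qed
      then obtain J where J: "J \<subseteq> K-{k}" "(\<Sum>k\<in>J. a k s) = 1" "odd (\<Sum>k\<in>J. a k w)"
           "\<forall>i. i\<noteq>s \<and> i\<noteq>w \<longrightarrow> even (\<Sum>k\<in>J. a k i)" by blast
      have finJ: "finite J" using J(1) fin finite_subset by blast
      have kJ: "k \<notin> J" using J(1) by auto
      have ins: "\<And>i. (\<Sum>k'\<in>insert k J. a k' i) = a k i + (\<Sum>k'\<in>J. a k' i)"
        using finJ kJ by simp
      show ?thesis
      proof (rule exI[of _ "insert k J"], intro conjI allI impI)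
        show "insert k J \<subseteq> K" using J(1) kK by auto
        show "(\<Sum>k\<in>insert k J. a k s) = 1" using J(2) aks by (simp add: ins)
        show "odd (\<Sum>k\<in>insert k J. a k t)" using J(4) akt1 st wt by (simp add: ins)
        fix i assume i: "i\<noteq>s \<and> i\<noteq>t"
        show "even (\<Sum>k\<in>insert k J. a k i)"
        proof (cases "i = w")
          case True then show ?thesis using J(3) akw by (simp add: ins)
        next
          case False then show ?thesis using J(4) i oth by (simp add: ins)
        qed
      qed
    qed
  qed
qed


lemma cycle_lemma:
  fixes a :: "nat \<Rightarrow> 'n::finite \<Rightarrow> int"
  assumes fin: "finite K" and edg: "\<forall>k\<in>K. (\<forall>i. a k i \<ge> 0) \<and> (\<Sum>i\<in>UNIV. a k i) = 2"
   and ev: "\<forall>i. even (\<Sum>k\<in>K. a k i)" and posv: "(\<Sum>k\<in>K. a k v) \<noteq> 0"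
  shows "\<exists>I\<subseteq>K. (\<Sum>k\<in>I. a k v) = 2 \<and> (\<forall>i. even (\<Sum>k\<in>I. a k i))"
proof -
  obtain k where kK: "k \<in> K" and akt: "a k v \<noteq> 0" using posv by (meson sum.neutral)
  have nn: "\<forall>i. a k i \<ge> 0" and s2: "(\<Sum>i\<in>UNIV. a k i) = 2" using edg kK by auto
  have pos: "a k v > 0" using nn[rule_format, of v] akt by linarith
  have rem: "\<And>i. (\<Sum>k'\<in>K-{k}. a k' i) = (\<Sum>k'\<in>K. a k' i) - a k i"
    using fin kK by (simp add: sum_diff1)
  have finK': "finite (K-{k})" using fin by simp
  have edg': "\<forall>k\<in>K-{k}. (\<forall>i. a k i \<ge> 0) \<and> (\<Sum>i\<in>UNIV. a k i) = 2" using edg by auto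
  from edge_shape[OF nn s2 pos] show ?thesis
  proof
    assume L: "a k v = 2 \<and> (\<forall>i. i\<noteq>v \<longrightarrow> a k i = 0)"
    show ?thesis
    proof (rule exI[of _ "{k}"], intro conjI allI)
      show "{k} \<subseteq> K" using kK by auto
      show "(\<Sum>k\<in>{k}. a k v) = 2" using L by simp
      fix i show "even (\<Sum>k\<in>{k}. a k i)" using L by (cases "i = v") auto
    qed
  next
    assume "a k v = 1 \<and> (\<exists>w. w\<noteq>v \<and> a k w = 1 \<and> (\<forall>i. i\<noteq>v \<and> i\<noteq>w \<longrightarrow> a k i = 0))"
    then obtain w where akt1: "a k v = 1" and wt: "w \<noteq> v" and akw: "a k w = 1"
      and oth: "\<forall>i. i\<noteq>v \<and> i\<noteq>w \<longrightarrow> a k i = 0" by blast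
    have "\<exists>J\<subseteq>K-{k}. (\<Sum>k\<in>J. a k v) = 1 \<and> odd (\<Sum>k\<in>J. a k w) \<and>
           (\<forall>i. i\<noteq>v \<and> i\<noteq>w \<longrightarrow> even (\<Sum>k\<in>J. a k i))"
    proof (rule path_lemma[OF finK' edg'])
      show "v \<noteq> w" using wt by simp
      show "odd (\<Sum>k\<in>K-{k}. a k v)" using ev akt1 by (simp add: rem)
      show "odd (\<Sum>k\<in>K-{k}. a k w)" using ev akw by (simp add: rem)
      show "\<forall>i. i\<noteq>v \<and> i\<noteq>w \<longrightarrow> even (\<Sum>k\<in>K-{k}. a k i)" using ev oth by (simp add: rem)
    qed
    then obtain J where J: "J \<subseteq> K-{k}" "(\<Sum>k\<in>J. a k v) = 1" "odd (\<Sum>k\<in>J. a k w)"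
         "\<forall>i. i\<noteq>v \<and> i\<noteq>w \<longrightarrow> even (\<Sum>k\<in>J. a k i)" by blast
    have finJ: "finite J" using J(1) fin finite_subset by blast
    have kJ: "k \<notin> J" using J(1) by auto
    have ins: "\<And>i. (\<Sum>k'\<in>insert k J. a k' i) = a k i + (\<Sum>k'\<in>J. a k' i)"
      using finJ kJ by simp
    show ?thesis
    proof (rule exI[of _ "insert k J"], intro conjI allI)
      show "insert k J \<subseteq> K" using J(1) kK by auto
      show "(\<Sum>k\<in>insert k J. a k v) = 2" using J(2) akt1 by (simp add: ins)
      fix i
      show "even (\<Sum>k\<in>insert k J. a k i)"
      proof (cases "i = w")
        case True then show ?thesis using J(3) akw by (simp add: ins)
      next
        case False
        show ?thesis
        proof (cases "i = v")
          case True then show ?thesis using J(2) akt1 by (simp add: ins)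
        next
          case F2: False then show ?thesis using J(4) False oth by (simp add: ins)
        qed
      qed
    qed
  qed
qed

lemma even_add_mod2: "even (x::int) \<Longrightarrow> (y + x) mod 2 = y mod 2"
  by presburger

lemma even_sub_mod2: "even (x::int) \<Longrightarrow> (y - x) mod 2 = y mod 2"
  by presburger

theorem lemma18:
  fixes f :: "('n::finite \<Rightarrow> int) \<Rightarrow> ereal"
    and r z1 z2 :: "'n \<Rightarrow> int" and istar :: 'n
  assumes vals: "\<forall>z. f z = \<infinity> \<or> (\<exists>q::rat. f z = ereal (of_rat q))"
    and conv: "SBO_jump_M_convex f"
    and par1: "\<forall>i. z1 i mod 2 = r i mod 2"
    and par2: "\<forall>i. z2 i mod 2 = r i mod 2"
    and gap: "z1 istar - z2 istar \<ge> 2"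
  shows "\<exists>z1' z2' :: 'n \<Rightarrow> int.
           (\<forall>i. z1' i mod 2 = r i mod 2) \<and> (\<forall>i. z2' i mod 2 = r i mod 2) \<and>
           (\<forall>i. z1' i + z2' i = z1 i + z2 i) \<and>
           z1' istar = z1 istar - 2 \<and> z2' istar = z2 istar + 2 \<and>
           (\<forall>i. z1 i = z2 i \<longrightarrow> z1' i = z1 i \<and> z2' i = z2 i) \<and>
           f z1' + f z2' \<le> f z1 + f z2"
proof (cases "f z1 = \<infinity> \<or> f z2 = \<infinity>")
  case True
  have n1: "f z1 \<noteq> -\<infinity>" and n2: "f z2 \<noteq> -\<infinity>" using vals by (metis MInfty_neq_PInfty(1) MInfty_neq_ereal(1))+
  have inf: "f z1 + f z2 = \<infinity>" using True n1 n2 by auto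
  show ?thesis
  proof (rule exI[of _ "z1(istar := z1 istar - 2)"], rule exI[of _ "z2(istar := z2 istar + 2)"], intro conjI allI impI)
    fix i show "(z1(istar := z1 istar - 2)) i mod 2 = r i mod 2"
      using par1 by (cases "i = istar") (auto simp: even_sub_mod2)
  next
    fix i show "(z2(istar := z2 istar + 2)) i mod 2 = r i mod 2"
      using par2 by (cases "i = istar") (auto simp: even_add_mod2)
  next
    fix i show "(z1(istar := z1 istar - 2)) i + (z2(istar := z2 istar + 2)) i = z1 i + z2 i"
      by (cases "i = istar") auto
  next
    fix i assume "z1 i = z2 i"
    then show "(z1(istar := z1 istar - 2)) i = z1 i" "(z2(istar := z2 istar + 2)) i = z2 i"
      using gap by (cases "i = istar"; auto)+
  qed (auto simp: inf)
next
  case False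
  then have fin1: "f z1 \<noteq> \<infinity>" and fin2: "f z2 \<noteq> \<infinity>" by auto
  obtain l p and g :: "nat \<Rightarrow> real" where
    dec: "two_step_decomp l p (\<lambda>i. z2 i - z1 i)" and
    fz2: "f z2 = f z1 + ereal (\<Sum>k<l. g k)" and
    ineq: "\<forall>I\<subseteq>{..<l}. f (\<lambda>i. z1 i + (\<Sum>k\<in>I. p k i)) \<le> f z1 + ereal (\<Sum>k\<in>I. g k)"
    using conv fin1 fin2 unfolding SBO_jump_M_convex_def by blast
  define d where "d i = z2 i - z1 i" for i
  define sg where "sg i = sgn (d i)" for i
  have pk2: "\<And>k. k < l \<Longrightarrow> (\<Sum>i\<in>UNIV. \<bar>p k i\<bar>) = 2"
    and sq: "\<And>k. k < l \<Longrightarrow> sqsub (p k) d"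
    and dsum: "\<And>i. d i = (\<Sum>k<l. p k i)"
    using dec unfolding two_step_decomp_def d_def by (auto dest: fun_cong)
  have psg: "p k i = sg i * \<bar>p k i\<bar>" if "k < l" for k i
  proof -
    have h: "\<bar>p k i\<bar> \<le> \<bar>d i\<bar>" "p k i * d i \<ge> 0" using sq[OF that] unfolding sqsub_def by auto
    consider "d i = 0" | "d i > 0" | "d i < 0" by linarith
    then show ?thesis
    proof cases
      case 1 then show ?thesis using h by (simp add: sg_def)
    next
      case 2 then have "p k i \<ge> 0" using h(2) by (simp add: zero_le_mult_iff)
      then show ?thesis using 2 by (simp add: sg_def)
    next
      case 3 then have "p k i \<le> 0" using h(2) by (simp add: zero_le_mult_iff)
      then show ?thesis using 3 by (simp add: sg_def)
    qed
  qed
  have qsg: "(\<Sum>k\<in>I. p k i) = sg i * (\<Sum>k\<in>I. \<bar>p k i\<bar>)" if "I \<subseteq> {..<l}" for I i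
  proof -
    have "(\<Sum>k\<in>I. p k i) = (\<Sum>k\<in>I. sg i * \<bar>p k i\<bar>)"
      by (rule sum.cong) (use that psg in auto)
    then show ?thesis by (simp add: sum_distrib_left)
  qed
  have degd: "(\<Sum>k<l. \<bar>p k i\<bar>) = \<bar>d i\<bar>" for i
  proof (cases "d i = 0")
    case True
    have "\<forall>k\<in>{..<l}. \<bar>p k i\<bar> = 0" 
    proof
      fix k assume "k \<in> {..<l}"
      then have "\<bar>p k i\<bar> \<le> \<bar>d i\<bar>" using sq[of k] unfolding sqsub_def by simp
      then show "\<bar>p k i\<bar> = 0" using True by simp
    qed
    then show ?thesis using True by simp
  next
    case False
    have "d i = sg i * (\<Sum>k<l. \<bar>p k i\<bar>)" using dsum qsg[of "{..<l}" i] by simp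
    then have "\<bar>d i\<bar> = \<bar>sg i\<bar> * (\<Sum>k<l. \<bar>p k i\<bar>)" by (simp add: abs_mult)
    then show ?thesis using False by (simp add: sg_def abs_sgn_eq)
  qed
  have deven: "even (d i)" for i
  proof -
    have "z1 i mod 2 = z2 i mod 2" using par1 par2 by metis
    then show ?thesis unfolding d_def by presburger
  qed
  have dstar: "d istar \<le> -2" using gap unfolding d_def by simp
  obtain I where IK: "I \<subseteq> {..<l}" and Istar: "(\<Sum>k\<in>I. \<bar>p k istar\<bar>) = 2"
    and Iev: "\<forall>i. even (\<Sum>k\<in>I. \<bar>p k i\<bar>)"
  proof -
    have "\<exists>I\<subseteq>{..<l}. (\<Sum>k\<in>I. (\<lambda>k i. \<bar>p k i\<bar>) k istar) = 2 \<and> (\<forall>i. even (\<Sum>k\<in>I. (\<lambda>k i. \<bar>p k i\<bar>) k i))"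
    proof (rule cycle_lemma)
      show "finite {..<l}" by simp
      show "\<forall>k\<in>{..<l}. (\<forall>i. \<bar>p k i\<bar> \<ge> 0) \<and> (\<Sum>i\<in>UNIV. \<bar>p k i\<bar>) = 2" using pk2 by auto
      show "\<forall>i. even (\<Sum>k\<in>{..<l}. \<bar>p k i\<bar>)" using degd deven by (simp add: lessThan_def)
      show "(\<Sum>k\<in>{..<l}. \<bar>p k istar\<bar>) \<noteq> 0" using degd[of istar] dstar by simp
    qed
    then show ?thesis using that by auto
  qed
  define q where "q i = (\<Sum>k\<in>I. p k i)" for i
  have qeq: "q i = sg i * (\<Sum>k\<in>I. \<bar>p k i\<bar>)" for i unfolding q_def using qsg[OF IK] .
  have qev: "even (q i)" for i using qeq Iev by simp
  have qstar: "q istar = -2" using qeq[of istar] Istar dstar by (simp add: sg_def)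
  have q0: "d i = 0 \<Longrightarrow> q i = 0" for i using qeq by (simp add: sg_def)
  have finI: "finite I" using IK finite_subset by blast
  have compl: "(\<Sum>k\<in>{..<l}-I. p k i) = d i - q i" for i
    using dsum[of i] IK by (simp add: q_def sum_diff)
  have gcompl: "(\<Sum>k\<in>{..<l}-I. g k) = (\<Sum>k<l. g k) - (\<Sum>k\<in>I. g k)"
    using IK by (simp add: sum_diff)
  have f1: "f (\<lambda>i. z1 i + q i) \<le> f z1 + ereal (\<Sum>k\<in>I. g k)"
    using ineq[rule_format, OF IK] unfolding q_def .
  have f2': "f (\<lambda>i. z1 i + (\<Sum>k\<in>{..<l}-I. p k i)) \<le> f z1 + ereal (\<Sum>k\<in>{..<l}-I. g k)"
    by (rule ineq[rule_format]) auto
  have "(\<lambda>i. z1 i + (\<Sum>k\<in>{..<l}-I. p k i)) = (\<lambda>i. z2 i - q i)"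
    by (rule ext) (simp add: compl d_def)
  then have f2: "f (\<lambda>i. z2 i - q i) \<le> f z1 + ereal ((\<Sum>k<l. g k) - (\<Sum>k\<in>I. g k))"
    using f2' gcompl by simp
  obtain x where fx: "f z1 = ereal x" using vals fin1 by blast
  have "f (\<lambda>i. z1 i + q i) + f (\<lambda>i. z2 i - q i) \<le>
        (f z1 + ereal (\<Sum>k\<in>I. g k)) + (f z1 + ereal ((\<Sum>k<l. g k) - (\<Sum>k\<in>I. g k)))"
    using f1 f2 by (rule add_mono)
  also have "\<dots> = f z1 + f z2" using fz2 fx by simp
  finally have fin_ineq: "f (\<lambda>i. z1 i + q i) + f (\<lambda>i. z2 i - q i) \<le> f z1 + f z2" .
  show ?thesis
  proof (rule exI[of _ "\<lambda>i. z1 i + q i"], rule exI[of _ "\<lambda>i. z2 i - q i"], intro conjI allI impI)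
    fix i show "(z1 i + q i) mod 2 = r i mod 2" using even_add_mod2[OF qev[of i], of "z1 i"] par1 by simp
  next
    fix i show "(z2 i - q i) mod 2 = r i mod 2" using even_sub_mod2[OF qev[of i], of "z2 i"] par2 by simp
  next
    fix i assume "z1 i = z2 i"
    then have "q i = 0" using q0 d_def by simp
    then show "z1 i + q i = z1 i" "z2 i - q i = z2 i" by simp_all
  qed (use qstar fin_ineq in auto)
qed

end
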